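(* Let $\tau>\tau_0>0$, $\gamma>0$, $f:[0,\infty)\to[0,\infty)$ continuous, and $\mathcal D,T$ as in the context. Then for every $u\in\mathcal D$, the function $t\mapsto(Tu)(t)$ is continuously differentiable on $[-\tau,0]$ (with one-sided derivatives at the endpoints).
   Context: For $u\in C([-\tau,0],[0,\infty))$ let $H_0(u)=u(0)-\int_{\tau_0}^{\tau}f(u(-a))e^{-\gamma(a-\tau_0)}da$, and $\mathcal D=\{u\in C([-\tau,0],[0,\infty)) : H_0(u)\ge0\}$. For $u\in\mathcal D$ define $Tu\in C([-\tau,0],[0,\infty))$ by $$(Tu)(t)=e^{-\gamma(t+\tau)}H_0(u)+\int_{\tau_0}^{\tau}f(u(t+\tau-a))e^{-\gamma(a-\tau_0)}da,\quad t\in[-\tau,\tau_0-\tau],$$ $$(Tu)(t)=e^{-\gamma(t+\tau)}H_0(u)+\int_{\tau_0}^{t+\tau}f((Tu)(t-a))e^{-\gamma(a-\tau_0)}da+\int_{t+\tau}^{\tau}f(u(t+\tau-a))e^{-\gamma(a-\tau_0)}da,\quad t\in(\tau_0-\tau,0]$$ (the second formula determines $Tu$ successively, since it only uses values of $Tu$ at points $t-a\le t-\tau_0$). *)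

theory Defs
  imports "HOL-Analysis.Analysis"
begin

text \<open>Functions in C([-tau,0],[0,infinity)) are modelled as real functions that are
  continuous and nonnegative on [-tau,0]; values outside [-tau,0] are irrelevant.\<close>

definition H0 :: "real \<Rightarrow> real \<Rightarrow> real \<Rightarrow> (real \<Rightarrow> real) \<Rightarrow> (real \<Rightarrow> real) \<Rightarrow> real" where
  "H0 \<tau> \<tau>0 \<gamma> f u = u 0 - integral {\<tau>0..\<tau>} (\<lambda>a. f (u (-a)) * exp (-\<gamma> * (a - \<tau>0)))"

definition inC :: "real \<Rightarrow> (real \<Rightarrow> real) \<Rightarrow> bool" where
  "inC \<tau> u \<longleftrightarrow> continuous_on {-\<tau>..0} u \<and> (\<forall>t\<in>{-\<tau>..0}. 0 \<le> u t)"

definition domD :: "real \<Rightarrow> real \<Rightarrow> real \<Rightarrow> (real \<Rightarrow> real) \<Rightarrow> (real \<Rightarrow> real) set" where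
  "domD \<tau> \<tau>0 \<gamma> f = {u. inC \<tau> u \<and> H0 \<tau> \<tau>0 \<gamma> f u \<ge> 0}"

definition T_eqs :: "real \<Rightarrow> real \<Rightarrow> real \<Rightarrow> (real \<Rightarrow> real) \<Rightarrow> (real \<Rightarrow> real) \<Rightarrow> (real \<Rightarrow> real) \<Rightarrow> bool" where
  "T_eqs \<tau> \<tau>0 \<gamma> f u v \<longleftrightarrow>
     (\<forall>t\<in>{-\<tau>..\<tau>0-\<tau>}. v t = exp (-\<gamma> * (t + \<tau>)) * H0 \<tau> \<tau>0 \<gamma> f u
        + integral {\<tau>0..\<tau>} (\<lambda>a. f (u (t + \<tau> - a)) * exp (-\<gamma> * (a - \<tau>0)))) \<and>
     (\<forall>t\<in>{\<tau>0-\<tau><..0}. v t = exp (-\<gamma> * (t + \<tau>)) * H0 \<tau> \<tau>0 \<gamma> f u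
        + integral {\<tau>0..t+\<tau>} (\<lambda>a. f (v (t - a)) * exp (-\<gamma> * (a - \<tau>0)))
        + integral {t+\<tau>..\<tau>} (\<lambda>a. f (u (t + \<tau> - a)) * exp (-\<gamma> * (a - \<tau>0))))"

definition Tmap :: "real \<Rightarrow> real \<Rightarrow> real \<Rightarrow> (real \<Rightarrow> real) \<Rightarrow> (real \<Rightarrow> real) \<Rightarrow> (real \<Rightarrow> real)" where
  "Tmap \<tau> \<tau>0 \<gamma> f u = (THE v. inC \<tau> v \<and> T_eqs \<tau> \<tau>0 \<gamma> f u v \<and> (\<forall>t. t \<notin> {-\<tau>..0} \<longrightarrow> v t = 0))"

end

theory Submission
  imports Defs
begin

lemma subst_int: "integral {p..q} (\<lambda>a. g (t - a)) = integral {t-q..t-p} (g::real\<Rightarrow>real)"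
proof -
  have "integral {p..q} (\<lambda>a. g (t - a)) = integral {-q..-p} (\<lambda>y. g (y+t))"
    using Henstock_Kurzweil_Integration.integral_reflect_real[of "-p" "-q" "\<lambda>y. g (y+t)"] by (simp add: algebra_simps)
  also have "\<dots> = integral {t-q..t-p} g"
    using integral_shift_real_ivl[of "t-q" t "t-p" g] by simp
  finally show ?thesis .
qed

definition Gh :: "real \<Rightarrow> real \<Rightarrow> (real \<Rightarrow> real) \<Rightarrow> real \<Rightarrow> real" where
  "Gh ta ga h x = integral {-2*ta..x} (\<lambda>s. h s * exp (ga * s))"

definition Psi :: "real \<Rightarrow> real \<Rightarrow> real \<Rightarrow> (real \<Rightarrow> real) \<Rightarrow> (real \<Rightarrow> real) \<Rightarrow> (real \<Rightarrow> real) \<Rightarrow> real \<Rightarrow> real" where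
  "Psi ta ta0 ga f u W t = exp (-ga*(t+ta)) * H0 ta ta0 ga f u + integral {ta0..ta} (\<lambda>a. f (W (t - a)) * exp (-ga*(a-ta0)))"

definition Phi :: "real \<Rightarrow> real \<Rightarrow> real \<Rightarrow> (real \<Rightarrow> real) \<Rightarrow> (real \<Rightarrow> real) \<Rightarrow> (real \<Rightarrow> real) \<Rightarrow> real \<Rightarrow> real" where
  "Phi ta ta0 ga f u W t = (if t \<le> -ta then u (t+ta) else Psi ta ta0 ga f u W t)"

definition PW :: "real \<Rightarrow> (real \<Rightarrow> real) \<Rightarrow> (real \<Rightarrow> real) \<Rightarrow> bool" where
  "PW ta u W \<longleftrightarrow> continuous_on {-2*ta..0} W \<and> (\<forall>s\<in>{-2*ta..0}. 0 \<le> W s) \<and> (\<forall>s. s \<le> -ta \<longrightarrow> W s = u (s+ta))"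

context
  fixes \<tau> \<tau>0 \<gamma> :: real and f :: "real \<Rightarrow> real" and u :: "real \<Rightarrow> real"
  assumes p: "0 < \<tau>0" "\<tau>0 < \<tau>" "0 < \<gamma>"
    and fc: "continuous_on {0..} f" and fnn: "\<forall>x\<ge>0. 0 \<le> f x"
    and uC: "inC \<tau> u" and Hnn: "H0 \<tau> \<tau>0 \<gamma> f u \<ge> 0"
begin

abbreviation "H \<equiv> H0 \<tau> \<tau>0 \<gamma> f u"

lemma cont_fW: "continuous_on S W \<Longrightarrow> (\<forall>x\<in>S. 0 \<le> W x) \<Longrightarrow> continuous_on S (\<lambda>x. f (W x))"
  by (rule continuous_on_compose2[OF fc]) auto

lemma cont_shift:
  assumes h: "continuous_on {-2*\<tau>..0} h" and t: "t \<in> {-\<tau>..0}"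
  shows "continuous_on {\<tau>0..\<tau>} (\<lambda>a. h (t-a) * exp (-\<gamma>*(a-\<tau>0)))"
proof -
  have "continuous_on {\<tau>0..\<tau>} (\<lambda>a. h (t-a))"
    by (rule continuous_on_compose2[OF h]) (use t p in \<open>auto intro!: continuous_intros\<close>)
  then show ?thesis by (auto intro!: continuous_intros)
qed


lemma subst:
  assumes h: "continuous_on {-2*\<tau>..0} h" and t: "t \<in> {-\<tau>..0}"
  shows "integral {\<tau>0..\<tau>} (\<lambda>a. h (t-a) * exp (-\<gamma>*(a-\<tau>0)))
     = exp (-\<gamma>*(t-\<tau>0)) * (Gh \<tau> \<gamma> h (t-\<tau>0) - Gh \<tau> \<gamma> h (t-\<tau>))"
proof -
  define g where "g s = h s * exp (\<gamma> * s)" for s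
  have gc: "continuous_on {-2*\<tau>..0} g" unfolding g_def using h by (auto intro!: continuous_intros)
  have e: "h (t-a) * exp (-\<gamma>*(a-\<tau>0)) = exp (-\<gamma>*(t-\<tau>0)) * g (t - a)" for a
    unfolding g_def by (simp add: mult_ac exp_add[symmetric] algebra_simps)
  have "integral {\<tau>0..\<tau>} (\<lambda>a. h (t-a) * exp (-\<gamma>*(a-\<tau>0)))
     = exp (-\<gamma>*(t-\<tau>0)) * integral {\<tau>0..\<tau>} (\<lambda>a. g (t-a))"
    unfolding e by simp
  also have "integral {\<tau>0..\<tau>} (\<lambda>a. g (t-a)) = integral {t-\<tau>..t-\<tau>0} g"
    by (rule subst_int)
  also have "\<dots> = Gh \<tau> \<gamma> h (t-\<tau>0) - Gh \<tau> \<gamma> h (t-\<tau>)"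
  proof -
    have "g integrable_on {-2*\<tau>..t-\<tau>0}"
      by (rule integrable_continuous_interval, rule continuous_on_subset[OF gc]) (use t p in auto)
    then have "integral {-2*\<tau>..t-\<tau>} g + integral {t-\<tau>..t-\<tau>0} g = integral {-2*\<tau>..t-\<tau>0} g"
      by (intro Henstock_Kurzweil_Integration.integral_combine) (use t p in auto)
    then show ?thesis unfolding Gh_def g_def[symmetric] by simp
  qed
  finally show ?thesis .
qed

lemma G_deriv:
  assumes h: "continuous_on {-2*\<tau>..0} h" and c: "c \<in> {\<tau>0..\<tau>}" and t: "t \<in> {-\<tau>..0}"
  shows "((\<lambda>t. Gh \<tau> \<gamma> h (t-c)) has_real_derivative (h (t-c) * exp (\<gamma>*(t-c)))) (at t within {-\<tau>..0})"
proof -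
  define g where "g s = h s * exp (\<gamma> * s)" for s
  have gc: "continuous_on {-2*\<tau>..0} g" unfolding g_def using h by (auto intro!: continuous_intros)
  have 1: "((\<lambda>x. integral {-2*\<tau>..x} g) has_real_derivative g (t-c)) (at (t-c) within {-2*\<tau>..0})"
    by (rule integral_has_real_derivative[OF gc]) (use t c p in auto)
  have 2: "((\<lambda>x. integral {-2*\<tau>..x} g) has_real_derivative g (t-c)) (at (t-c) within (\<lambda>t. t-c) ` {-\<tau>..0})"
    by (rule DERIV_subset[OF 1]) (use c p in auto)
  have 3: "((\<lambda>t. t - c) has_real_derivative 1) (at t within {-\<tau>..0})"
    by (auto intro!: derivative_eq_intros)
  from DERIV_image_chain[OF 2 3] show ?thesis unfolding Gh_def g_def o_def by simp
qed

lemma Psi_deriv: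
  assumes Wc: "continuous_on {-2*\<tau>..0} W" and Wn: "\<forall>s\<in>{-2*\<tau>..0}. 0 \<le> W s" and t: "t \<in> {-\<tau>..0}"
  shows "(Psi \<tau> \<tau>0 \<gamma> f u W has_real_derivative
      (-\<gamma> * Psi \<tau> \<tau>0 \<gamma> f u W t + f (W (t-\<tau>0)) - f (W (t-\<tau>)) * exp (-\<gamma>*(\<tau>-\<tau>0)))) (at t within {-\<tau>..0})"
proof -
  define h where "h s = f (W s)" for s
  have hc: "continuous_on {-2*\<tau>..0} h" unfolding h_def by (rule cont_fW[OF Wc Wn])
  define Q where "Q x = exp (-\<gamma>*(x+\<tau>)) * H + exp (-\<gamma>*(x-\<tau>0)) * (Gh \<tau> \<gamma> h (x-\<tau>0) - Gh \<tau> \<gamma> h (x-\<tau>))" for x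
  have PQ: "Psi \<tau> \<tau>0 \<gamma> f u W x = Q x" if "x \<in> {-\<tau>..0}" for x
    unfolding Psi_def Q_def using subst[OF hc that] unfolding h_def by simp
  have c1: "\<tau>0 \<in> {\<tau>0..\<tau>}" "\<tau> \<in> {\<tau>0..\<tau>}" using p by auto
  define E1 where "E1 = exp (-\<gamma>*(t+\<tau>))"
  define E2 where "E2 = exp (-\<gamma>*(t-\<tau>0))"
  define G1 where "G1 = Gh \<tau> \<gamma> h (t-\<tau>0)"
  define G2 where "G2 = Gh \<tau> \<gamma> h (t-\<tau>)"
  have d1: "((\<lambda>x. exp (-\<gamma>*(x+\<tau>))) has_real_derivative (E1 * (-\<gamma>))) (at t within {-\<tau>..0})"
    unfolding E1_def by (auto intro!: derivative_eq_intros)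
  have d2: "((\<lambda>x. exp (-\<gamma>*(x-\<tau>0))) has_real_derivative (E2 * (-\<gamma>))) (at t within {-\<tau>..0})"
    unfolding E2_def by (auto intro!: derivative_eq_intros)
  have dQ: "(Q has_real_derivative
     (E1 * (-\<gamma>) * H + 0 * exp (-\<gamma>*(t+\<tau>))) + (E2 * (-\<gamma>) * (G1 - G2)
      + (h (t-\<tau>0) * exp (\<gamma>*(t-\<tau>0)) - h (t-\<tau>) * exp (\<gamma>*(t-\<tau>))) * exp (-\<gamma>*(t-\<tau>0)))) (at t within {-\<tau>..0})"
    unfolding Q_def G1_def G2_def
    by (intro DERIV_add DERIV_mult d1 d2 DERIV_const DERIV_diff G_deriv[OF hc c1(1) t] G_deriv[OF hc c1(2) t])
  have e1: "E2 * exp (\<gamma>*(t-\<tau>0)) = 1" unfolding E2_def by (simp add: exp_add[symmetric])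
  have e2: "E2 * exp (\<gamma>*(t-\<tau>)) = exp (-\<gamma>*(\<tau>-\<tau>0))" unfolding E2_def by (simp add: exp_add[symmetric] algebra_simps)
  have ee: "(x*a - y*b) * E2 = x*(E2*a) - y*(E2*b)" for x y a b :: real by (simp add: algebra_simps)
  have PQt: "Psi \<tau> \<tau>0 \<gamma> f u W t = E1 * H + E2 * (G1 - G2)"
    using PQ[OF t] unfolding Q_def E1_def E2_def G1_def G2_def .
  have "E1 * (-\<gamma>) * H + 0 * exp (-\<gamma>*(t+\<tau>)) + (E2 * (-\<gamma>) * (G1 - G2)
      + (h (t-\<tau>0) * exp (\<gamma>*(t-\<tau>0)) - h (t-\<tau>) * exp (\<gamma>*(t-\<tau>))) * exp (-\<gamma>*(t-\<tau>0)))
    = -\<gamma> * Psi \<tau> \<tau>0 \<gamma> f u W t + f (W (t-\<tau>0)) - f (W (t-\<tau>)) * exp (-\<gamma>*(\<tau>-\<tau>0))"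
    unfolding PQt E2_def[symmetric] ee e1 e2 h_def by (simp add: algebra_simps)
  with dQ have "(Q has_real_derivative
      (-\<gamma> * Psi \<tau> \<tau>0 \<gamma> f u W t + f (W (t-\<tau>0)) - f (W (t-\<tau>)) * exp (-\<gamma>*(\<tau>-\<tau>0)))) (at t within {-\<tau>..0})"
    by simp
  then show ?thesis
    by (rule has_field_derivative_transform_within[where d=1]) (use t PQ in auto)
qed

lemma Phi_Psi:
  assumes W: "PW \<tau> u W" and t: "t \<in> {-\<tau>..0}"
  shows "Phi \<tau> \<tau>0 \<gamma> f u W t = Psi \<tau> \<tau>0 \<gamma> f u W t"
proof (cases "t \<le> -\<tau>")
  case True
  then have tt: "t = -\<tau>" using t by auto
  have "integral {\<tau>0..\<tau>} (\<lambda>a. f (W (-\<tau> - a)) * exp (-\<gamma>*(a-\<tau>0)))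
      = integral {\<tau>0..\<tau>} (\<lambda>a. f (u (- a)) * exp (-\<gamma>*(a-\<tau>0)))"
    by (rule integral_cong) (use W p in \<open>auto simp: PW_def\<close>)
  then show ?thesis unfolding Phi_def Psi_def tt H0_def by simp
qed (simp add: Phi_def)

lemma Psi_nonneg:
  assumes W: "PW \<tau> u W" and t: "t \<in> {-\<tau>..0}"
  shows "0 \<le> Psi \<tau> \<tau>0 \<gamma> f u W t"
proof -
  have hc: "continuous_on {-2*\<tau>..0} (\<lambda>s. f (W s))" using W cont_fW by (auto simp: PW_def)
  have "0 \<le> integral {\<tau>0..\<tau>} (\<lambda>a. f (W (t - a)) * exp (-\<gamma>*(a-\<tau>0)))"
  proof (rule Henstock_Kurzweil_Integration.integral_nonneg)
    show "(\<lambda>a. f (W (t - a)) * exp (-\<gamma>*(a-\<tau>0))) integrable_on {\<tau>0..\<tau>}"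
      by (rule integrable_continuous_interval, rule cont_shift[OF hc t])
    fix a assume "a \<in> {\<tau>0..\<tau>}"
    then have "t - a \<in> {-2*\<tau>..0}" using t p by auto
    then show "0 \<le> f (W (t - a)) * exp (-\<gamma>*(a-\<tau>0))" using W fnn by (auto simp: PW_def)
  qed
  then show ?thesis unfolding Psi_def using Hnn by simp
qed

lemma Psi_cont:
  assumes W: "PW \<tau> u W"
  shows "continuous_on {-\<tau>..0} (Psi \<tau> \<tau>0 \<gamma> f u W)"
  by (rule DERIV_continuous_on, rule Psi_deriv) (use W in \<open>auto simp: PW_def\<close>)

lemma Phi_PW:
  assumes W: "PW \<tau> u W"
  shows "PW \<tau> u (Phi \<tau> \<tau>0 \<gamma> f u W)"
proof -
  have uc: "continuous_on {-\<tau>..0} u" "\<forall>t\<in>{-\<tau>..0}. 0 \<le> u t" using uC by (auto simp: inC_def)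
  have c1: "continuous_on {-2*\<tau>..-\<tau>} (Phi \<tau> \<tau>0 \<gamma> f u W)"
  proof (rule continuous_on_eq)
    show "continuous_on {-2*\<tau>..-\<tau>} (\<lambda>t. u (t+\<tau>))"
      by (rule continuous_on_compose2[OF uc(1)]) (auto intro!: continuous_intros)
  qed (auto simp: Phi_def)
  have c2: "continuous_on {-\<tau>..0} (Phi \<tau> \<tau>0 \<gamma> f u W)"
    by (rule continuous_on_eq[OF Psi_cont[OF W]]) (use Phi_Psi[OF W] in auto)
  have "continuous_on ({-2*\<tau>..-\<tau>} \<union> {-\<tau>..0}) (Phi \<tau> \<tau>0 \<gamma> f u W)"
    by (rule continuous_on_closed_Un[OF _ _ c1 c2]) auto
  moreover have "{-2*\<tau>..-\<tau>} \<union> {-\<tau>..0} = {-2*\<tau>..0}" using p by auto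
  ultimately have c: "continuous_on {-2*\<tau>..0} (Phi \<tau> \<tau>0 \<gamma> f u W)" by simp
  have n: "0 \<le> Phi \<tau> \<tau>0 \<gamma> f u W s" if s: "s \<in> {-2*\<tau>..0}" for s
  proof (cases "s \<le> -\<tau>")
    case True then show ?thesis using uc(2) s by (auto simp: Phi_def)
  next
    case False then show ?thesis using Psi_nonneg[OF W, of s] s by (auto simp: Phi_def)
  qed
  show ?thesis using c n by (auto simp: PW_def Phi_def)
qed

lemma Phi_agree:
  assumes AB: "\<forall>s\<in>{-2*\<tau>..c}. A s = B s" and s: "s \<le> c + \<tau>0"
  shows "Phi \<tau> \<tau>0 \<gamma> f u A s = Phi \<tau> \<tau>0 \<gamma> f u B s"
proof (cases "s \<le> -\<tau>")
  case False
  have "integral {\<tau>0..\<tau>} (\<lambda>a. f (A (s - a)) * exp (-\<gamma>*(a-\<tau>0)))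
      = integral {\<tau>0..\<tau>} (\<lambda>a. f (B (s - a)) * exp (-\<gamma>*(a-\<tau>0)))"
    by (rule integral_cong) (use AB False s in auto)
  then show ?thesis using False by (simp add: Phi_def Psi_def)
qed (simp add: Phi_def)

lemma exists_fix: "\<exists>W. PW \<tau> u W \<and> (\<forall>t\<in>{-\<tau>..0}. W t = Psi \<tau> \<tau>0 \<gamma> f u W t)"
proof -
  have uc: "continuous_on {-\<tau>..0} u" "\<forall>t\<in>{-\<tau>..0}. 0 \<le> u t" using uC by (auto simp: inC_def)
  define W0 where "W0 s = u (min (s+\<tau>) 0)" for s
  have "continuous_on {-2*\<tau>..0} W0" unfolding W0_def
    by (rule continuous_on_compose2[OF uc(1)]) (auto intro!: continuous_intros)
  moreover have "\<forall>s\<in>{-2*\<tau>..0}. 0 \<le> W0 s" unfolding W0_def using uc(2) p by auto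
  moreover have "\<forall>s. s \<le> -\<tau> \<longrightarrow> W0 s = u (s+\<tau>)" unfolding W0_def by auto
  ultimately have PW0: "PW \<tau> u W0" by (simp add: PW_def)
  define Wn where "Wn n = (Phi \<tau> \<tau>0 \<gamma> f u ^^ n) W0" for n
  have PWn: "PW \<tau> u (Wn n)" for n
    by (induction n) (auto simp: Wn_def PW0 Phi_PW)
  have ag: "\<forall>s\<in>{-2*\<tau>..-\<tau>+real n*\<tau>0}. Wn n s = Wn (Suc n) s" for n
  proof (induction n)
    case 0
    then show ?case using PW0 by (auto simp: Wn_def Phi_def PW_def)
  next
    case (Suc n)
    show ?case
    proof
      fix s assume s: "s \<in> {-2*\<tau>..-\<tau>+real (Suc n)*\<tau>0}"
      have "s \<le> (-\<tau>+real n*\<tau>0) + \<tau>0" using s by (auto simp: algebra_simps)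
      from Phi_agree[OF Suc.IH this] show "Wn (Suc n) s = Wn (Suc (Suc n)) s"
        by (simp add: Wn_def)
    qed
  qed
  define N where "N = nat \<lceil>\<tau>/\<tau>0\<rceil>"
  have "\<tau>/\<tau>0 \<le> real N" unfolding N_def by linarith
  then have NN: "\<tau> \<le> real N * \<tau>0" using p by (simp add: field_simps)
  show ?thesis
  proof (intro exI conjI ballI)
    show "PW \<tau> u (Wn N)" by (rule PWn)
    fix t assume t: "t \<in> {-\<tau>..0}"
    then have "Wn N t = Wn (Suc N) t" using ag[of N] NN p by auto
    also have "\<dots> = Phi \<tau> \<tau>0 \<gamma> f u (Wn N) t" by (simp add: Wn_def)
    also have "\<dots> = Psi \<tau> \<tau>0 \<gamma> f u (Wn N) t" by (rule Phi_Psi[OF PWn t])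
    finally show "Wn N t = Psi \<tau> \<tau>0 \<gamma> f u (Wn N) t" .
  qed
qed

definition "sol v \<longleftrightarrow> inC \<tau> v \<and> T_eqs \<tau> \<tau>0 \<gamma> f u v \<and> (\<forall>t. t \<notin> {-\<tau>..0} \<longrightarrow> v t = 0)"

lemma v_sol:
  assumes W: "PW \<tau> u W" and fx: "\<forall>t\<in>{-\<tau>..0}. W t = Psi \<tau> \<tau>0 \<gamma> f u W t"
  shows "sol (\<lambda>t. if t \<in> {-\<tau>..0} then W t else 0)" (is "sol ?v")
proof -
  have Wc: "continuous_on {-2*\<tau>..0} W" and Wn: "\<forall>s\<in>{-2*\<tau>..0}. 0 \<le> W s"
    and Wu: "\<And>s. s \<le> -\<tau> \<Longrightarrow> W s = u (s+\<tau>)" using W by (auto simp: PW_def)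
  have hc: "continuous_on {-2*\<tau>..0} (\<lambda>s. f (W s))" using cont_fW[OF Wc Wn] .
  have "continuous_on {-\<tau>..0} ?v"
    by (rule continuous_on_eq[OF continuous_on_subset[OF Wc]]) (use p in auto)
  moreover have "\<forall>t\<in>{-\<tau>..0}. 0 \<le> ?v t" using Wn p by auto
  ultimately have i: "inC \<tau> ?v" by (simp add: inC_def)
  have e1: "?v t = exp (-\<gamma> * (t + \<tau>)) * H
        + integral {\<tau>0..\<tau>} (\<lambda>a. f (u (t + \<tau> - a)) * exp (-\<gamma> * (a - \<tau>0)))"
    if t: "t \<in> {-\<tau>..\<tau>0-\<tau>}" for t
  proof -
    have t': "t \<in> {-\<tau>..0}" using t p by auto
    have "integral {\<tau>0..\<tau>} (\<lambda>a. f (W (t - a)) * exp (-\<gamma> * (a - \<tau>0)))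
       = integral {\<tau>0..\<tau>} (\<lambda>a. f (u (t + \<tau> - a)) * exp (-\<gamma> * (a - \<tau>0)))"
    proof (rule integral_cong)
      fix a assume "a \<in> {\<tau>0..\<tau>}"
      then have "t - a \<le> -\<tau>" using t by auto
      then have "W (t-a) = u (t + \<tau> - a)" using Wu by (simp add: algebra_simps)
      then show "f (W (t - a)) * exp (-\<gamma> * (a - \<tau>0)) = f (u (t + \<tau> - a)) * exp (-\<gamma> * (a - \<tau>0))" by simp
    qed
    then show ?thesis using fx t' by (simp add: Psi_def)
  qed
  have e2: "?v t = exp (-\<gamma> * (t + \<tau>)) * H
        + integral {\<tau>0..t+\<tau>} (\<lambda>a. f (?v (t - a)) * exp (-\<gamma> * (a - \<tau>0)))
        + integral {t+\<tau>..\<tau>} (\<lambda>a. f (u (t + \<tau> - a)) * exp (-\<gamma> * (a - \<tau>0)))"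
    if t: "t \<in> {\<tau>0-\<tau><..0}" for t
  proof -
    have t': "t \<in> {-\<tau>..0}" using t p by auto
    have int: "(\<lambda>a. f (W (t - a)) * exp (-\<gamma> * (a - \<tau>0))) integrable_on {\<tau>0..\<tau>}"
      by (rule integrable_continuous_interval, rule cont_shift[OF hc t'])
    have sp: "integral {\<tau>0..t+\<tau>} (\<lambda>a. f (W (t - a)) * exp (-\<gamma> * (a - \<tau>0)))
       + integral {t+\<tau>..\<tau>} (\<lambda>a. f (W (t - a)) * exp (-\<gamma> * (a - \<tau>0)))
       = integral {\<tau>0..\<tau>} (\<lambda>a. f (W (t - a)) * exp (-\<gamma> * (a - \<tau>0)))"
      by (rule Henstock_Kurzweil_Integration.integral_combine[OF _ _ int]) (use t in auto)
    have c1: "integral {\<tau>0..t+\<tau>} (\<lambda>a. f (W (t - a)) * exp (-\<gamma> * (a - \<tau>0)))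
       = integral {\<tau>0..t+\<tau>} (\<lambda>a. f (?v (t - a)) * exp (-\<gamma> * (a - \<tau>0)))"
      by (rule integral_cong) (use t p in auto)
    have c2: "integral {t+\<tau>..\<tau>} (\<lambda>a. f (W (t - a)) * exp (-\<gamma> * (a - \<tau>0)))
       = integral {t+\<tau>..\<tau>} (\<lambda>a. f (u (t + \<tau> - a)) * exp (-\<gamma> * (a - \<tau>0)))"
    proof (rule integral_cong)
      fix a assume "a \<in> {t+\<tau>..\<tau>}"
      then have "t - a \<le> -\<tau>" by auto
      then have "W (t-a) = u (t + \<tau> - a)" using Wu by (simp add: algebra_simps)
      then show "f (W (t - a)) * exp (-\<gamma> * (a - \<tau>0)) = f (u (t + \<tau> - a)) * exp (-\<gamma> * (a - \<tau>0))" by simp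
    qed
    show ?thesis using fx t' sp c1 c2 by (simp add: Psi_def)
  qed
  have "T_eqs \<tau> \<tau>0 \<gamma> f u ?v" unfolding T_eqs_def using e1 e2 by blast
  then show ?thesis using i by (simp add: sol_def)
qed

lemma sol_unique:
  assumes s1: "sol v1" and s2: "sol v2"
  shows "v1 = v2"
proof -
  have T1: "T_eqs \<tau> \<tau>0 \<gamma> f u v1" and T2: "T_eqs \<tau> \<tau>0 \<gamma> f u v2" using s1 s2 by (auto simp: sol_def)
  have part1: "v1 t = v2 t" if "t \<in> {-\<tau>..\<tau>0-\<tau>}" for t
    using T1 T2 that unfolding T_eqs_def by auto
  have ind: "\<forall>t\<in>{-\<tau>..0}. t \<le> -\<tau> + real n * \<tau>0 \<longrightarrow> v1 t = v2 t" for n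
  proof (induction n)
    case 0
    then show ?case using part1 p by auto
  next
    case (Suc n)
    show ?case
    proof (intro ballI impI)
      fix t assume t: "t \<in> {-\<tau>..0}" and tn: "t \<le> -\<tau> + real (Suc n) * \<tau>0"
      show "v1 t = v2 t"
      proof (cases "t \<le> \<tau>0 - \<tau>")
        case True then show ?thesis using part1 t by auto
      next
        case False
        then have t2: "t \<in> {\<tau>0-\<tau><..0}" using t by auto
        have "integral {\<tau>0..t+\<tau>} (\<lambda>a. f (v1 (t - a)) * exp (-\<gamma> * (a - \<tau>0)))
            = integral {\<tau>0..t+\<tau>} (\<lambda>a. f (v2 (t - a)) * exp (-\<gamma> * (a - \<tau>0)))"
        proof (rule integral_cong)
          fix a assume a: "a \<in> {\<tau>0..t+\<tau>}"
          have "t - a \<in> {-\<tau>..0}" "t - a \<le> -\<tau> + real n * \<tau>0" using a t tn p by (auto simp: algebra_simps)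
          then show "f (v1 (t - a)) * exp (-\<gamma> * (a - \<tau>0)) = f (v2 (t - a)) * exp (-\<gamma> * (a - \<tau>0))"
            using Suc.IH by auto
        qed
        then show ?thesis using T1 T2 t2 unfolding T_eqs_def by auto
      qed
    qed
  qed
  define N where "N = nat \<lceil>\<tau>/\<tau>0\<rceil>"
  have "\<tau>/\<tau>0 \<le> real N" unfolding N_def by linarith
  then have NN: "\<tau> \<le> real N * \<tau>0" using p by (simp add: field_simps)
  show ?thesis
  proof
    fix t show "v1 t = v2 t"
    proof (cases "t \<in> {-\<tau>..0}")
      case True then show ?thesis using ind[of N] NN by auto
    next
      case False then show ?thesis using s1 s2 by (auto simp: sol_def)
    qed
  qed
qed

lemma main:
  "\<exists>v'. continuous_on {-\<tau>..0} v' \<and>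
           (\<forall>t\<in>{-\<tau>..0}. (Tmap \<tau> \<tau>0 \<gamma> f u has_real_derivative v' t) (at t within {-\<tau>..0}))"
proof -
  obtain W where W: "PW \<tau> u W" and fx: "\<forall>t\<in>{-\<tau>..0}. W t = Psi \<tau> \<tau>0 \<gamma> f u W t"
    using exists_fix by blast
  define v where "v t = (if t \<in> {-\<tau>..0} then W t else 0)" for t
  have sv: "sol v" unfolding v_def by (rule v_sol[OF W fx])
  have Tv: "Tmap \<tau> \<tau>0 \<gamma> f u = v"
    unfolding Tmap_def
  proof (rule the_equality)
    show "inC \<tau> v \<and> T_eqs \<tau> \<tau>0 \<gamma> f u v \<and> (\<forall>t. t \<notin> {-\<tau>..0} \<longrightarrow> v t = 0)"
      using sv by (simp add: sol_def)
    fix w assume "inC \<tau> w \<and> T_eqs \<tau> \<tau>0 \<gamma> f u w \<and> (\<forall>t. t \<notin> {-\<tau>..0} \<longrightarrow> w t = 0)"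
    then have "sol w" by (simp add: sol_def)
    then show "w = v" using sol_unique sv by blast
  qed
  have Wc: "continuous_on {-2*\<tau>..0} W" and Wn: "\<forall>s\<in>{-2*\<tau>..0}. 0 \<le> W s"
    using W by (auto simp: PW_def)
  have hc: "continuous_on {-2*\<tau>..0} (\<lambda>s. f (W s))" using cont_fW[OF Wc Wn] .
  define v' where "v' t = -\<gamma> * Psi \<tau> \<tau>0 \<gamma> f u W t + f (W (t-\<tau>0)) - f (W (t-\<tau>)) * exp (-\<gamma>*(\<tau>-\<tau>0))" for t
  have "continuous_on {-\<tau>..0} (\<lambda>t. f (W (t-\<tau>0)))"
    by (rule continuous_on_compose2[OF hc]) (use p in \<open>auto intro!: continuous_intros\<close>)
  moreover have "continuous_on {-\<tau>..0} (\<lambda>t. f (W (t-\<tau>)))"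
    by (rule continuous_on_compose2[OF hc]) (use p in \<open>auto intro!: continuous_intros\<close>)
  ultimately have "continuous_on {-\<tau>..0} v'"
    unfolding v'_def using Psi_cont[OF W] by (intro continuous_intros) auto
  moreover have "(Tmap \<tau> \<tau>0 \<gamma> f u has_real_derivative v' t) (at t within {-\<tau>..0})"
    if t: "t \<in> {-\<tau>..0}" for t
    unfolding Tv v'_def
    by (rule has_field_derivative_transform_within[OF Psi_deriv[OF Wc Wn t], where d=1])
       (use t fx in \<open>auto simp: v_def\<close>)
  ultimately show ?thesis by blast
qed

end
theorem lemma4:
  fixes \<tau> \<tau>0 \<gamma> :: real and f :: "real \<Rightarrow> real" and u :: "real \<Rightarrow> real"
  assumes "0 < \<tau>0" and "\<tau>0 < \<tau>" and "0 < \<gamma>"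
    and "continuous_on {0..} f" and "\<forall>x\<ge>0. 0 \<le> f x"
    and "u \<in> domD \<tau> \<tau>0 \<gamma> f"
  shows "\<exists>v'. continuous_on {-\<tau>..0} v' \<and>
           (\<forall>t\<in>{-\<tau>..0}. (Tmap \<tau> \<tau>0 \<gamma> f u has_real_derivative v' t) (at t within {-\<tau>..0}))"
  using main[OF assms(1-5)] assms(6) unfolding domD_def by blast

end
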